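(* Let $L=\langle S,A,\to\rangle$ be a labelled transition system. For all $x,y\in\{o,b\}$ and $s,t\in S$, if $s\mathrel{\underline{\leftrightarrow}}^{ed}_{(x,y)}t$ then $s\equiv^{ed}_{E(x,y)}t$.
   Context: An LTS is $\langle S,A,\to\rangle$ with states $S$, actions $A$ containing the internal action $\tau$, and $\to\subseteq S\times A\times S$; write $s\xrightarrow{a}t$, $\twoheadrightarrow$ for the reflexive-transitive and $\twoheadrightarrow^+$ for the transitive closure of $\xrightarrow{\tau}$. For $R\subseteq S\times S$ and $s,s',t$: $s\twoheadrightarrow_{o,R,t}s'$ iff $s\twoheadrightarrow s'$; $s\twoheadrightarrow_{b,R,t}s'$ iff $s\twoheadrightarrow s'$, $t\,R\,s$ and $t\,R\,s'$. For $x,y\in\{o,b\}$, a symmetric $R$ is an $(x,y)$-generic bisimulation if whenever $s\,R\,t$ and $s\xrightarrow{a}s'$, either $a=\tau$ and $s'\,R\,t$, or there exist $t',t_1,t_2$ with $t\twoheadrightarrow_{x,R,s}t_1\xrightarrow{a}t_2\twoheadrightarrow_{y,R,s'}t'$ and $s'\,R\,t'$. It is an $(x,y)$-generic bisimulation with explicit divergence if moreover for all $s\,R\,t$, if there is an infinite sequence $s=s_0\xrightarrow{\tau}s_1\xrightarrow{\tau}\cdots$, then there exist $t'$ with $t\twoheadrightarrow^+t'$ and some $k$ with $s_k\,R\,t'$. $s\mathrel{\underline{\leftrightarrow}}^{ed}_{(x,y)}t$ iff some such relation relates $s$ and $t$. Game with explicit divergence. Let $\frown,\smile$ be formal tags and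 $E\subseteq\{\frown,\smile\}$. Spoiler-owned configurations $\langle (s,t),c,m,r\rangle_S$ and Duplicator-owned $\langle (s,t),c,m,r\rangle_D$ have $(s,t)\in S\times S$, $c\in (A\times S)\cup\{\dagger\}$, $m\in (S\times\{\frown,\smile\})\cup\{\dagger\}$, $r\in\{*,\checkmark\}$. From $\langle (s,t),c,m,r\rangle_S$ Spoiler may: (S1) move to $\langle (s,t),c,m,*\rangle_D$ if $c\neq\dagger$; (S2a) for some $s\xrightarrow{a}s'$, move to $\langle (s,t),(a,s'),(t,\frown),*\rangle_D$ if $c=\dagger$; (S2b) for some $s\xrightarrow{a}s'$, move to $\langle (s,t),(a,s'),(t,\frown),\checkmark\rangle_D$ if $c\neq (a,s')$; (S3) for some $t\xrightarrow{a}t'$, move to $\langle (t,s),(a,t'),(s,\frown),\checkmark\rangle_D$. From $\langle (u,v),(a,u'),(\bar v,f),r\rangle_D$ Duplicator may: (D1) move to $\langle (u',\bar v),\dagger,\dagger,*\rangle_S$ if $a=\tau$; (D2) if $f=\frown$ and $\bar v\xrightarrow{a}v'$: (a) move to $\langle (u',v'),(a,u'),(v',\smile),*\rangle_S$, or (b) move to $\langle (u',v'),\dagger,\dagger,\checkmark\rangle_S$, or (c) only if $\smile\in E$, move to $\langle (u,v),(a,u'),(v',\smile),*\rangle_S$; (D3) for some $\bar v\xrightarrow{\tau}v'$: (a) move to $\langle (u,v'),(a,u'),(v',f),*\rangle_S$, or (b) only if $f=\smile$, move to $\langle (u',v'),\dagger,\dagger,\checkmark\rangle_S$, or (c) only if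 $f\in E$, move to $\langle (u,v),(a,u'),(v',f),*\rangle_S$. Duplicator wins a finite play if Spoiler gets stuck, and an infinite play if it has infinitely many $\checkmark$ rewards; other plays are won by Spoiler. $s\equiv^{ed}_E t$ iff Duplicator has a strategy winning all plays from $\langle (s,t),\dagger,\dagger,*\rangle_S$. $E(x,y)$ is the smallest set with $\frown\in E(o,y)$ and $\smile\in E(x,o)$ for all $x,y\in\{o,b\}$. *)

theory Defs
  imports Main
begin

datatype mode = ModeO | ModeB
datatype tag = Frown | Smile
datatype reward = Star | Check

definition tau_steps :: "'a \<Rightarrow> ('s \<Rightarrow> 'a \<Rightarrow> 's \<Rightarrow> bool) \<Rightarrow> 's \<Rightarrow> 's \<Rightarrow> bool" where
  "tau_steps tau tr = (\<lambda>x y. tr x tau y)\<^sup>*\<^sup>*"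

definition tau_steps_plus :: "'a \<Rightarrow> ('s \<Rightarrow> 'a \<Rightarrow> 's \<Rightarrow> bool) \<Rightarrow> 's \<Rightarrow> 's \<Rightarrow> bool" where
  "tau_steps_plus tau tr = (\<lambda>x y. tr x tau y)\<^sup>+\<^sup>+"

definition mstep :: "'a \<Rightarrow> ('s \<Rightarrow> 'a \<Rightarrow> 's \<Rightarrow> bool) \<Rightarrow> mode \<Rightarrow> ('s \<Rightarrow> 's \<Rightarrow> bool) \<Rightarrow> 's \<Rightarrow> 's \<Rightarrow> 's \<Rightarrow> bool" where
  "mstep tau tr x R t s s' \<longleftrightarrow>
     tau_steps tau tr s s' \<and> (x = ModeB \<longrightarrow> R t s \<and> R t s')"

definition generic_bisim :: "'a \<Rightarrow> ('s \<Rightarrow> 'a \<Rightarrow> 's \<Rightarrow> bool) \<Rightarrow> mode \<Rightarrow> mode \<Rightarrow> ('s \<Rightarrow> 's \<Rightarrow> bool) \<Rightarrow> bool" where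
  "generic_bisim tau tr x y R \<longleftrightarrow> symp R \<and>
     (\<forall>s t a s'. R s t \<longrightarrow> tr s a s' \<longrightarrow>
        (a = tau \<and> R s' t) \<or>
        (\<exists>t' t1 t2. mstep tau tr x R s t t1 \<and> tr t1 a t2 \<and>
                    mstep tau tr y R s' t2 t' \<and> R s' t'))"

definition generic_bisim_ed :: "'a \<Rightarrow> ('s \<Rightarrow> 'a \<Rightarrow> 's \<Rightarrow> bool) \<Rightarrow> mode \<Rightarrow> mode \<Rightarrow> ('s \<Rightarrow> 's \<Rightarrow> bool) \<Rightarrow> bool" where
  "generic_bisim_ed tau tr x y R \<longleftrightarrow> generic_bisim tau tr x y R \<and>
     (\<forall>s t. R s t \<longrightarrow> (\<forall>f. f 0 = s \<and> (\<forall>n. tr (f n) tau (f (Suc n))) \<longrightarrow>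
        (\<exists>t' k. tau_steps_plus tau tr t t' \<and> R (f k) t')))"

definition bisimilar_ed :: "'a \<Rightarrow> ('s \<Rightarrow> 'a \<Rightarrow> 's \<Rightarrow> bool) \<Rightarrow> mode \<Rightarrow> mode \<Rightarrow> 's \<Rightarrow> 's \<Rightarrow> bool" where
  "bisimilar_ed tau tr x y s t \<longleftrightarrow> (\<exists>R. generic_bisim_ed tau tr x y R \<and> R s t)"

(* Game configurations; None encodes the dagger *)
datatype ('s, 'a) conf =
    SConf "'s \<times> 's" "('a \<times> 's) option" "('s \<times> tag) option" reward
  | DConf "'s \<times> 's" "('a \<times> 's) option" "('s \<times> tag) option" reward

fun is_dconf :: "('s, 'a) conf \<Rightarrow> bool" where
  "is_dconf (SConf _ _ _ _) = False"
| "is_dconf (DConf _ _ _ _) = True"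

fun conf_reward :: "('s, 'a) conf \<Rightarrow> reward" where
  "conf_reward (SConf _ _ _ r) = r"
| "conf_reward (DConf _ _ _ r) = r"

inductive game_move :: "'a \<Rightarrow> ('s \<Rightarrow> 'a \<Rightarrow> 's \<Rightarrow> bool) \<Rightarrow> tag set \<Rightarrow> ('s, 'a) conf \<Rightarrow> ('s, 'a) conf \<Rightarrow> bool"
  for tau tr E where
  S1: "c \<noteq> None \<Longrightarrow> game_move tau tr E (SConf (s, t) c m r) (DConf (s, t) c m Star)"
| S2a: "tr s a s' \<Longrightarrow> c = None \<Longrightarrow>
     game_move tau tr E (SConf (s, t) c m r) (DConf (s, t) (Some (a, s')) (Some (t, Frown)) Star)"
| S2b: "tr s a s' \<Longrightarrow> c \<noteq> Some (a, s') \<Longrightarrow>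
     game_move tau tr E (SConf (s, t) c m r) (DConf (s, t) (Some (a, s')) (Some (t, Frown)) Check)"
| S3: "tr t a t' \<Longrightarrow>
     game_move tau tr E (SConf (s, t) c m r) (DConf (t, s) (Some (a, t')) (Some (s, Frown)) Check)"
| D1: "a = tau \<Longrightarrow>
     game_move tau tr E (DConf (u, v) (Some (a, u')) (Some (vb, f)) r) (SConf (u', vb) None None Star)"
| D2a: "f = Frown \<Longrightarrow> tr vb a v' \<Longrightarrow>
     game_move tau tr E (DConf (u, v) (Some (a, u')) (Some (vb, f)) r)
       (SConf (u', v') (Some (a, u')) (Some (v', Smile)) Star)"
| D2b: "f = Frown \<Longrightarrow> tr vb a v' \<Longrightarrow>
     game_move tau tr E (DConf (u, v) (Some (a, u')) (Some (vb, f)) r)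
       (SConf (u', v') None None Check)"
| D2c: "f = Frown \<Longrightarrow> tr vb a v' \<Longrightarrow> Smile \<in> E \<Longrightarrow>
     game_move tau tr E (DConf (u, v) (Some (a, u')) (Some (vb, f)) r)
       (SConf (u, v) (Some (a, u')) (Some (v', Smile)) Star)"
| D3a: "tr vb tau v' \<Longrightarrow>
     game_move tau tr E (DConf (u, v) (Some (a, u')) (Some (vb, f)) r)
       (SConf (u, v') (Some (a, u')) (Some (v', f)) Star)"
| D3b: "tr vb tau v' \<Longrightarrow> f = Smile \<Longrightarrow>
     game_move tau tr E (DConf (u, v) (Some (a, u')) (Some (vb, f)) r)
       (SConf (u', v') None None Check)"
| D3c: "tr vb tau v' \<Longrightarrow> f \<in> E \<Longrightarrow>
     game_move tau tr E (DConf (u, v) (Some (a, u')) (Some (vb, f)) r)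
       (SConf (u, v) (Some (a, u')) (Some (v', f)) Star)"

(* A Duplicator strategy maps a finite play history (nonempty list, last element
   = current configuration) to the next configuration. *)
type_synonym ('s, 'a) dstrategy = "('s, 'a) conf list \<Rightarrow> ('s, 'a) conf"

definition consistent_prefix ::
  "'a \<Rightarrow> ('s \<Rightarrow> 'a \<Rightarrow> 's \<Rightarrow> bool) \<Rightarrow> tag set \<Rightarrow> ('s, 'a) dstrategy \<Rightarrow> ('s, 'a) conf \<Rightarrow> ('s, 'a) conf list \<Rightarrow> bool" where
  "consistent_prefix tau tr E \<sigma> c0 ps \<longleftrightarrow> ps \<noteq> [] \<and> hd ps = c0 \<and>
     (\<forall>i. Suc i < length ps \<longrightarrow> game_move tau tr E (ps ! i) (ps ! Suc i) \<and>
        (is_dconf (ps ! i) \<longrightarrow> ps ! Suc i = \<sigma> (take (Suc i) ps)))"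

(* sigma is winning for Duplicator from c0: on every consistent finite play ending in a
   Duplicator configuration it prescribes a legal move (so finite maximal plays end with
   Spoiler stuck), and every infinite consistent play has infinitely many check rewards. *)
definition dup_winning ::
  "'a \<Rightarrow> ('s \<Rightarrow> 'a \<Rightarrow> 's \<Rightarrow> bool) \<Rightarrow> tag set \<Rightarrow> ('s, 'a) dstrategy \<Rightarrow> ('s, 'a) conf \<Rightarrow> bool" where
  "dup_winning tau tr E \<sigma> c0 \<longleftrightarrow>
     (\<forall>ps. consistent_prefix tau tr E \<sigma> c0 ps \<longrightarrow> is_dconf (last ps) \<longrightarrow>
        game_move tau tr E (last ps) (\<sigma> ps)) \<and>
     (\<forall>p :: nat \<Rightarrow> ('s, 'a) conf. p 0 = c0 \<longrightarrow>
        (\<forall>n. game_move tau tr E (p n) (p (Suc n)) \<and>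
             (is_dconf (p n) \<longrightarrow> p (Suc n) = \<sigma> (map p [0..<Suc n]))) \<longrightarrow>
        (\<exists>\<^sub>\<infinity>n. conf_reward (p n) = Check))"

definition game_equiv_ed :: "'a \<Rightarrow> ('s \<Rightarrow> 'a \<Rightarrow> 's \<Rightarrow> bool) \<Rightarrow> tag set \<Rightarrow> 's \<Rightarrow> 's \<Rightarrow> bool" where
  "game_equiv_ed tau tr E s t \<longleftrightarrow>
     (\<exists>\<sigma>. dup_winning tau tr E \<sigma> (SConf (s, t) None None Star))"

definition Eset :: "mode \<Rightarrow> mode \<Rightarrow> tag set" where
  "Eset x y = {f. (f = Frown \<and> x = ModeO) \<or> (f = Smile \<and> y = ModeO)}"

end

theory Submission
  imports Defs
begin

lemma mstep_mono:
  assumes "mstep tau tr x R t s s'" "\<And>a b. R a b \<Longrightarrow> Q a b"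
  shows "mstep tau tr x Q t s s'"
  using assms unfolding mstep_def by auto

definition semi :: "'a \<Rightarrow> ('s \<Rightarrow> 'a \<Rightarrow> 's \<Rightarrow> bool) \<Rightarrow> mode \<Rightarrow> ('s \<Rightarrow> 's \<Rightarrow> bool) \<Rightarrow> bool" where
  "semi tau tr y R \<longleftrightarrow> symp R \<and>
     (\<forall>s t a s'. R s t \<longrightarrow> tr s a s' \<longrightarrow>
        (a = tau \<and> (\<exists>t'. tau_steps tau tr t t' \<and> R s t' \<and> R s' t')) \<or>
        (\<exists>t' t1 t2. mstep tau tr ModeB R s t t1 \<and> tr t1 a t2 \<and>
                    mstep tau tr y R s' t2 t' \<and> R s' t'))"

definition edc :: "'a \<Rightarrow> ('s \<Rightarrow> 'a \<Rightarrow> 's \<Rightarrow> bool) \<Rightarrow> ('s \<Rightarrow> 's \<Rightarrow> bool) \<Rightarrow> bool" where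
  "edc tau tr R \<longleftrightarrow> (\<forall>s t. R s t \<longrightarrow> (\<forall>f. f 0 = s \<and> (\<forall>n. tr (f n) tau (f (Suc n))) \<longrightarrow>
        (\<exists>t' k. tau_steps_plus tau tr t t' \<and> R (f k) t')))"

lemma gb_ed_iff: "generic_bisim_ed tau tr x y R \<longleftrightarrow> generic_bisim tau tr x y R \<and> edc tau tr R"
  unfolding generic_bisim_ed_def edc_def by simp

definition SS :: "'a \<Rightarrow> ('s \<Rightarrow> 'a \<Rightarrow> 's \<Rightarrow> bool) \<Rightarrow> mode \<Rightarrow> 's \<Rightarrow> 's \<Rightarrow> bool" where
  "SS tau tr y s t \<longleftrightarrow> (\<exists>R. semi tau tr y R \<and> edc tau tr R \<and> R s t)"

lemma semi_SS: "semi tau tr y (SS tau tr y)"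
proof -
  let ?S = "SS tau tr y"
  have sym: "symp ?S" unfolding symp_def SS_def semi_def by (blast dest: sympD)
  have "(a = tau \<and> (\<exists>t'. tau_steps tau tr t t' \<and> ?S s t' \<and> ?S s' t')) \<or>
        (\<exists>t' t1 t2. mstep tau tr ModeB ?S s t t1 \<and> tr t1 a t2 \<and>
                    mstep tau tr y ?S s' t2 t' \<and> ?S s' t')"
    if "?S s t" "tr s a s'" for s t a s'
  proof -
    from that obtain R where R: "semi tau tr y R" "edc tau tr R" "R s t" unfolding SS_def by blast
    have sub: "\<And>a b. R a b \<Longrightarrow> ?S a b" using R unfolding SS_def by blast
    from R that(2) have "(a = tau \<and> (\<exists>t'. tau_steps tau tr t t' \<and> R s t' \<and> R s' t')) \<or>
        (\<exists>t' t1 t2. mstep tau tr ModeB R s t t1 \<and> tr t1 a t2 \<and>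
                    mstep tau tr y R s' t2 t' \<and> R s' t')" unfolding semi_def by blast
    then show ?thesis using sub mstep_mono[of tau tr _ R _ _ _ ?S] by (smt (verit))
  qed
  then show ?thesis using sym unfolding semi_def by blast
qed

lemma edc_SS: "edc tau tr (SS tau tr y)"
  unfolding edc_def
proof (intro allI impI)
  fix s t f assume "SS tau tr y s t" and f: "f 0 = s \<and> (\<forall>n. tr (f n) tau (f (Suc n)))"
  then obtain R where R: "semi tau tr y R" "edc tau tr R" "R s t" unfolding SS_def by blast
  then obtain t' k where "tau_steps_plus tau tr t t'" "R (f k) t'" using f unfolding edc_def by blast
  then show "\<exists>t' k. tau_steps_plus tau tr t t' \<and> SS tau tr y (f k) t'" using R unfolding SS_def by blast
qed

lemma semi_transfer:
  assumes "semi tau tr y R" "tau_steps tau tr s s'" "R s t"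
  shows "\<exists>t'. tau_steps tau tr t t' \<and> R s' t'"
  using assms(2,3)
  unfolding tau_steps_def
proof (induction rule: rtranclp_induct)
  case base then show ?case by auto
next
  case (step s1 s2)
  then obtain t1 where t1: "(\<lambda>x y. tr x tau y)\<^sup>*\<^sup>* t t1" "R s1 t1" by blast
  with step(2) assms(1) have
    "(\<exists>t'. tau_steps tau tr t1 t' \<and> R s1 t' \<and> R s2 t') \<or>
        (\<exists>t' ta tb. mstep tau tr ModeB R s1 t1 ta \<and> tr ta tau tb \<and>
                    mstep tau tr y R s2 tb t' \<and> R s2 t')"
    unfolding semi_def by blast
  then show ?case
  proof
    assume "\<exists>t'. tau_steps tau tr t1 t' \<and> R s1 t' \<and> R s2 t'"
    then show ?thesis using t1 unfolding tau_steps_def by (meson rtranclp_trans)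
  next
    assume "\<exists>t' ta tb. mstep tau tr ModeB R s1 t1 ta \<and> tr ta tau tb \<and>
                    mstep tau tr y R s2 tb t' \<and> R s2 t'"
    then obtain t' ta tb where "tau_steps tau tr t1 ta" "tr ta tau tb" "tau_steps tau tr tb t'" "R s2 t'"
      unfolding mstep_def by blast
    then show ?thesis using t1 unfolding tau_steps_def
      by (meson rtranclp.rtrancl_into_rtrancl rtranclp_trans)
  qed
qed


lemma path_of_steps:
  assumes "tau_steps tau tr t q"
  obtains n c where "c 0 = t" "c n = q" "\<forall>i<n. tr (c i) tau (c (Suc i))"
  using assms unfolding tau_steps_def rtranclp_power relpowp_fun_conv by blast

lemma path_suffix:
  assumes "\<forall>i<n. tr (c i) tau (c (Suc i))" "k \<le> n"
  shows "tau_steps tau tr (c k) (c n)"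
  using assms(2)
proof (induction "n - k" arbitrary: k)
  case 0 then show ?case by (simp add: tau_steps_def)
next
  case (Suc m)
  then have "k < n" by simp
  with Suc(1)[of "Suc k"] Suc(2) have "tau_steps tau tr (c (Suc k)) (c n)" by simp
  moreover have "tr (c k) tau (c (Suc k))" using assms(1) \<open>k < n\<close> by blast
  ultimately show ?case unfolding tau_steps_def by (meson converse_rtranclp_into_rtranclp)
qed

lemma SS_stutter:
  assumes "SS tau tr y p t" "tau_steps tau tr t q" "tau_steps tau tr q t1" "SS tau tr y p t1"
  shows "SS tau tr y p q"
proof -
  let ?S = "SS tau tr y"
  define X where "X a b \<longleftrightarrow> (\<exists>t t1. ?S a t \<and> tau_steps tau tr t b \<and> tau_steps tau tr b t1 \<and> ?S a t1)" for a b
  define G where "G a b \<longleftrightarrow> ?S a b \<or> X a b \<or> X b a" for a b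
  have semS: "semi tau tr y ?S" by (rule semi_SS)
  have edS: "edc tau tr ?S" by (rule edc_SS)
  have symS: "?S a b \<Longrightarrow> ?S b a" for a b using semS unfolding semi_def by (blast dest: sympD)
  have SG: "?S a b \<Longrightarrow> G a b" for a b unfolding G_def by simp
  have trans: "tau_steps tau tr a b \<Longrightarrow> tau_steps tau tr b c \<Longrightarrow> tau_steps tau tr a c" for a b c
    unfolding tau_steps_def by (rule rtranclp_trans)
  have ansS: "(a = tau \<and> (\<exists>t'. tau_steps tau tr t t' \<and> ?S s t' \<and> ?S s' t')) \<or>
        (\<exists>t' t1 t2. mstep tau tr ModeB ?S s t t1 \<and> tr t1 a t2 \<and>
                    mstep tau tr y ?S s' t2 t' \<and> ?S s' t')" if "?S s t" "tr s a s'" for s t a s'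
    using semS that unfolding semi_def by blast
  have semG: "semi tau tr y G"
    unfolding semi_def
  proof (intro conjI allI impI)
    show "symp G" unfolding symp_def G_def using symS by blast
  next
    fix s t a s' assume Gst: "G s t" and tr: "tr s a s'"
    show "(a = tau \<and> (\<exists>t'. tau_steps tau tr t t' \<and> G s t' \<and> G s' t')) \<or>
        (\<exists>t' t1 t2. mstep tau tr ModeB G s t t1 \<and> tr t1 a t2 \<and>
                    mstep tau tr y G s' t2 t' \<and> G s' t')"
    proof -
      { assume "?S s t"
        from ansS[OF this tr] have ?thesis using SG mstep_mono[of tau tr _ ?S _ _ _ G]
          by (smt (verit)) }
      moreover
      { assume "X s t"
        then obtain t0 t1 where X: "?S s t0" "tau_steps tau tr t0 t" "tau_steps tau tr t t1" "?S s t1"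
          unfolding X_def by blast
        from ansS[OF X(4) tr] have ?thesis
        proof
          assume "a = tau \<and> (\<exists>t'. tau_steps tau tr t1 t' \<and> ?S s t' \<and> ?S s' t')"
          then show ?thesis using X(3) trans SG by blast
        next
          assume "\<exists>t' ta tb. mstep tau tr ModeB ?S s t1 ta \<and> tr ta a tb \<and>
                    mstep tau tr y ?S s' tb t' \<and> ?S s' t'"
          then obtain t' ta tb where A: "mstep tau tr ModeB ?S s t1 ta" "tr ta a tb"
            "mstep tau tr y ?S s' tb t'" "?S s' t'" by blast
          have "tau_steps tau tr t ta" "?S s ta" using A(1) trans[OF X(3)] unfolding mstep_def by auto
          moreover have "G s t" using \<open>X s t\<close> unfolding G_def by simp
          ultimately have "mstep tau tr ModeB G s t ta" using SG unfolding mstep_def by simp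
          moreover have "mstep tau tr y G s' tb t'" by (rule mstep_mono[OF A(3) SG])
          ultimately show ?thesis using A(2) SG[OF A(4)] by blast
        qed }
      moreover
      { assume "X t s"
        then obtain t0 t1 where X: "?S t t0" "tau_steps tau tr t0 s" "tau_steps tau tr s t1" "?S t t1"
          unfolding X_def by blast
        obtain d where d: "tau_steps tau tr t d" "?S s d"
          using semi_transfer[OF semS X(2) symS[OF X(1)]] by blast
        from ansS[OF d(2) tr] have ?thesis
        proof
          assume "a = tau \<and> (\<exists>t'. tau_steps tau tr d t' \<and> ?S s t' \<and> ?S s' t')"
          then show ?thesis using d(1) trans SG by blast
        next
          assume "\<exists>t' ta tb. mstep tau tr ModeB ?S s d ta \<and> tr ta a tb \<and>
                    mstep tau tr y ?S s' tb t' \<and> ?S s' t'"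
          then obtain t' ta tb where A: "mstep tau tr ModeB ?S s d ta" "tr ta a tb"
            "mstep tau tr y ?S s' tb t'" "?S s' t'" by blast
          have "X t s" using X unfolding X_def by blast
          have "tau_steps tau tr t ta" "?S s ta" using A(1) trans[OF d(1)] unfolding mstep_def by auto
          moreover have "G s t" using \<open>X t s\<close> unfolding G_def by simp
          ultimately have "mstep tau tr ModeB G s t ta" using SG unfolding mstep_def by simp
          moreover have "mstep tau tr y G s' tb t'" by (rule mstep_mono[OF A(3) SG])
          ultimately show ?thesis using A(2) SG[OF A(4)] by blast
        qed }
      ultimately show ?thesis using Gst unfolding G_def by blast
    qed
  qed
  have edG: "edc tau tr G"
    unfolding edc_def
  proof (intro allI impI)
    fix s t f assume Gst: "G s t" and f: "f 0 = s \<and> (\<forall>n. tr (f n) tau (f (Suc n)))"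
    show "\<exists>t' k. tau_steps_plus tau tr t t' \<and> G (f k) t'"
    proof -
      { assume "?S s t"
        then have ?thesis using edS f SG unfolding edc_def by blast }
      moreover
      { assume "X s t"
        then obtain t0 t1 where X: "?S s t0" "tau_steps tau tr t0 t" "tau_steps tau tr t t1" "?S s t1"
          unfolding X_def by blast
        then obtain t' k where "tau_steps_plus tau tr t1 t'" "?S (f k) t'"
          using edS f unfolding edc_def by blast
        moreover have "tau_steps_plus tau tr t t'" using X(3) calculation(1)
          unfolding tau_steps_def tau_steps_plus_def by (rule rtranclp_tranclp_tranclp)
        ultimately have ?thesis using SG by blast }
      moreover
      { assume "X t s"
        then obtain t0 t1 where X: "?S t t0" "tau_steps tau tr t0 s" "tau_steps tau tr s t1" "?S t t1"
          unfolding X_def by blast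
        obtain n c where c: "c 0 = t0" "c n = s" "\<forall>i<n. tr (c i) tau (c (Suc i))"
          using path_of_steps[OF X(2)] by blast
        define h where "h i = (if i < n then c i else f (i - n))" for i
        have h0: "h 0 = t0" using c f unfolding h_def by auto
        have hs: "\<forall>i. tr (h i) tau (h (Suc i))"
        proof
          fix i
          show "tr (h i) tau (h (Suc i))"
          proof (cases "Suc i < n")
            case True then show ?thesis using c(3) unfolding h_def by auto
          next
            case False
            show ?thesis
            proof (cases "i < n")
              case True
              then have "Suc i = n" using False by simp
              then show ?thesis using c f True unfolding h_def by auto
            next
              case False
              then have "Suc i - n = Suc (i - n)" by simp
              then show ?thesis using f False unfolding h_def by auto
            qed
          qed
        qed
        obtain t' k where tk: "tau_steps_plus tau tr t t'" "?S (h k) t'"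
          using edS h0 hs symS[OF X(1)] unfolding edc_def by blast
        have ?thesis
        proof (cases "k < n")
          case False
          then show ?thesis using tk SG unfolding h_def by auto
        next
          case True
          then have "?S (c k) t'" using tk unfolding h_def by simp
          moreover have "tau_steps tau tr (c k) s" using path_suffix[of n tr c tau k] c(3) True c(2) by simp
          ultimately obtain w where w: "tau_steps tau tr t' w" "?S s w"
            using semi_transfer[OF semS] by blast
          have "tau_steps_plus tau tr t w" using tk(1) w(1)
            unfolding tau_steps_def tau_steps_plus_def by (rule tranclp_rtranclp_tranclp)
          then show ?thesis using w(2) f SG by metis
        qed }
      ultimately show ?thesis using Gst unfolding G_def by blast
    qed
  qed
  have "X p q" unfolding X_def using assms by blast
  then have "G p q" unfolding G_def by simp
  then show ?thesis unfolding SS_def using semG edG by blast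
qed

lemma SS_gb: "generic_bisim_ed tau tr ModeB y (SS tau tr y)"
  unfolding gb_ed_iff
proof
  let ?S = "SS tau tr y"
  have semS: "semi tau tr y ?S" by (rule semi_SS)
  show "edc tau tr ?S" by (rule edc_SS)
  show "generic_bisim tau tr ModeB y ?S"
    unfolding generic_bisim_def
  proof (intro conjI allI impI)
    show "symp ?S" using semS unfolding semi_def by blast
  next
    fix s t a s' assume st: "?S s t" and tr: "tr s a s'"
    from semS st tr have "(a = tau \<and> (\<exists>t'. tau_steps tau tr t t' \<and> ?S s t' \<and> ?S s' t')) \<or>
        (\<exists>t' t1 t2. mstep tau tr ModeB ?S s t t1 \<and> tr t1 a t2 \<and>
                    mstep tau tr y ?S s' t2 t' \<and> ?S s' t')" unfolding semi_def by blast
    then show "a = tau \<and> ?S s' t \<or>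
           (\<exists>t' t1 t2. mstep tau tr ModeB ?S s t t1 \<and> tr t1 a t2 \<and>
                    mstep tau tr y ?S s' t2 t' \<and> ?S s' t')"
    proof
      assume "a = tau \<and> (\<exists>t'. tau_steps tau tr t t' \<and> ?S s t' \<and> ?S s' t')"
      then obtain t' where a: "a = tau" and t': "tau_steps tau tr t t'" "?S s t'" "?S s' t'" by blast
      from t'(1) have "t = t' \<or> (\<exists>t0. tau_steps tau tr t t0 \<and> tr t0 tau t')"
        unfolding tau_steps_def by (blast elim: rtranclp.cases)
      then show ?thesis
      proof
        assume "t = t'" then show ?thesis using a t' by simp
      next
        assume "\<exists>t0. tau_steps tau tr t t0 \<and> tr t0 tau t'"
        then obtain t0 where t0: "tau_steps tau tr t t0" "tr t0 tau t'" by blast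
        have "tau_steps tau tr t0 t'" using t0(2) unfolding tau_steps_def by blast
        then have "?S s t0" using SS_stutter[OF st t0(1) _ t'(2)] by blast
        then have "mstep tau tr ModeB ?S s t t0" using st t0(1) unfolding mstep_def by simp
        moreover have "mstep tau tr y ?S s' t' t'" using t'(3) unfolding mstep_def tau_steps_def by (blast intro: rtranclp.rtrancl_refl)
        ultimately show ?thesis using t0(2) t'(3) a by blast
      qed
    qed simp
  qed
qed

lemma gb_SS:
  assumes "generic_bisim_ed tau tr ModeB y R" "R s t"
  shows "SS tau tr y s t"
proof -
  have g: "generic_bisim tau tr ModeB y R" and e: "edc tau tr R" using assms(1) unfolding gb_ed_iff by auto
  have "semi tau tr y R"
    unfolding semi_def
  proof (intro conjI allI impI)
    show "symp R" using g unfolding generic_bisim_def by blast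
  next
    fix s t a s' assume "R s t" "tr s a s'"
    then have "a = tau \<and> R s' t \<or> (\<exists>t' t1 t2. mstep tau tr ModeB R s t t1 \<and> tr t1 a t2 \<and>
                    mstep tau tr y R s' t2 t' \<and> R s' t')"
      using g unfolding generic_bisim_def by blast
    then show "(a = tau \<and> (\<exists>t'. tau_steps tau tr t t' \<and> R s t' \<and> R s' t')) \<or>
        (\<exists>t' t1 t2. mstep tau tr ModeB R s t t1 \<and> tr t1 a t2 \<and>
                    mstep tau tr y R s' t2 t' \<and> R s' t')"
      using \<open>R s t\<close> unfolding tau_steps_def by blast
  qed
  note this e
  then show ?thesis using assms(2) unfolding SS_def by blast
qed


locale gm =
  fixes tau :: 'a and tr :: "'s \<Rightarrow> 'a \<Rightarrow> 's \<Rightarrow> bool" and x y :: mode and B :: "'s \<Rightarrow> 's \<Rightarrow> bool"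
  assumes bis: "generic_bisim_ed tau tr x y B"
  and stut: "x = ModeB \<Longrightarrow> B p t \<Longrightarrow> tau_steps tau tr t q \<Longrightarrow> tau_steps tau tr q t1 \<Longrightarrow> B p t1 \<Longrightarrow> B p q"
begin

abbreviation TS where "TS \<equiv> \<lambda>a b. tr a tau b"

definition fin :: "'s \<Rightarrow> 's \<Rightarrow> bool" where
  "fin u' v2 = (if y = ModeB then B u' v2 else (\<exists>w. tau_steps tau tr v2 w \<and> B u' w))"
definition good1 :: "'a \<Rightarrow> 's \<Rightarrow> 's \<Rightarrow> bool" where
  "good1 a u' w = (\<exists>v2. tr w a v2 \<and> fin u' v2)"
definition PF :: "'s \<Rightarrow> 'a \<Rightarrow> 's \<Rightarrow> nat \<Rightarrow> 's \<Rightarrow> bool" where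
  "PF u a u' n w = (\<exists>z. (TS ^^ n) w z \<and> (x = ModeB \<longrightarrow> B u z) \<and> good1 a u' z)"
definition dF :: "'s \<Rightarrow> 'a \<Rightarrow> 's \<Rightarrow> 's \<Rightarrow> nat" where
  "dF u a u' w = (LEAST n. PF u a u' n w)"
definition PS :: "'s \<Rightarrow> nat \<Rightarrow> 's \<Rightarrow> bool" where
  "PS u' n w = (\<exists>z. (TS ^^ n) w z \<and> B u' z)"
definition dS :: "'s \<Rightarrow> 's \<Rightarrow> nat" where
  "dS u' w = (LEAST n. PS u' n w)"

definition chooseA :: "'s \<Rightarrow> 'a \<Rightarrow> 's \<Rightarrow> 's" where
  "chooseA vb a u' = (SOME v2. tr vb a v2 \<and> fin u' v2)"
definition chooseF :: "'s \<Rightarrow> 'a \<Rightarrow> 's \<Rightarrow> 's \<Rightarrow> 's" where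
  "chooseF u a u' vb = (SOME w'. TS vb w' \<and> PF u a u' (dF u a u' vb - 1) w')"
definition chooseS :: "'s \<Rightarrow> 's \<Rightarrow> 's" where
  "chooseS u' vb = (SOME w'. TS vb w' \<and> PS u' (dS u' vb - 1) w')"

fun step :: "('s, 'a) conf \<Rightarrow> ('s, 'a) conf" where
  "step (DConf (u,v) (Some (a,u')) (Some (vb,f)) r) =
   (if f = Frown then
      (if (\<exists>n. PF u a u' n vb) then
         (if dF u a u' vb = 0 then
            (if B u' (chooseA vb a u') then SConf (u', chooseA vb a u') None None Check
             else SConf (u, v) (Some (a,u')) (Some (chooseA vb a u', Smile)) Star)
          else
            (if x = ModeB then SConf (u, chooseF u a u' vb) (Some (a,u')) (Some (chooseF u a u' vb, Frown)) Star
             else SConf (u, v) (Some (a,u')) (Some (chooseF u a u' vb, Frown)) Star))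
       else SConf (u', vb) None None Star)
    else
      (if B u' (chooseS u' vb) then SConf (u', chooseS u' vb) None None Check
       else SConf (u, v) (Some (a,u')) (Some (chooseS u' vb, Smile)) Star))"
| "step c = c"

definition DInv :: "'s \<Rightarrow> 's \<Rightarrow> 'a \<Rightarrow> 's \<Rightarrow> 's \<Rightarrow> tag \<Rightarrow> bool" where
  "DInv u v a u' vb f = (B u v \<and> tr u a u' \<and>
     (f = Frown \<longrightarrow> ((\<exists>n. PF u a u' n vb) \<or> (vb = v \<and> a = tau \<and> B u' v)) \<and> (x = ModeB \<longrightarrow> vb = v)) \<and>
     (f = Smile \<longrightarrow> y = ModeO \<and> (\<exists>n. PS u' n vb) \<and> \<not> B u' vb))"

fun Inv :: "('s, 'a) conf \<Rightarrow> bool" where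
  "Inv (SConf (p,q) c m r) = (B p q \<and> (\<forall>a u'. c = Some (a,u') \<longrightarrow> (\<exists>vb f. m = Some (vb,f) \<and> DInv p q a u' vb f)))"
| "Inv (DConf (u,v) c m r) = (\<exists>a u' vb f. c = Some (a,u') \<and> m = Some (vb,f) \<and> DInv u v a u' vb f)"

lemma gb: "generic_bisim tau tr x y B" and ed: "edc tau tr B"
  using bis unfolding gb_ed_iff by auto

lemma Bsym: "B a b \<Longrightarrow> B b a"
  using gb unfolding generic_bisim_def by (blast dest: sympD)

lemma rel0: "(TS ^^ 0) a b \<longleftrightarrow> a = b" by simp

lemma start_inv:
  assumes "B s t" "tr s a s'"
  shows "DInv s t a s' t Frown"
proof -
  from gb assms have "a = tau \<and> B s' t \<or> (\<exists>t' t1 t2. mstep tau tr x B s t t1 \<and> tr t1 a t2 \<and>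
                    mstep tau tr y B s' t2 t' \<and> B s' t')"
    unfolding generic_bisim_def by blast
  then have "(\<exists>n. PF s a s' n t) \<or> (a = tau \<and> B s' t)"
  proof
    assume "\<exists>t' t1 t2. mstep tau tr x B s t t1 \<and> tr t1 a t2 \<and> mstep tau tr y B s' t2 t' \<and> B s' t'"
    then obtain t' t1 t2 where A: "mstep tau tr x B s t t1" "tr t1 a t2" "mstep tau tr y B s' t2 t'" "B s' t'"
      by blast
    from A(1) obtain n where n: "(TS ^^ n) t t1" unfolding mstep_def tau_steps_def rtranclp_power by blast
    have "fin s' t2" using A(3,4) unfolding fin_def mstep_def by auto
    then have "PF s a s' n t" using A(1,2) n unfolding PF_def good1_def mstep_def by blast
    then show ?thesis by blast
  qed simp
  then show ?thesis using assms unfolding DInv_def by auto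
qed

lemma spoiler_inv:
  assumes "Inv c" "\<not> is_dconf c" "game_move tau tr E c c'"
  shows "Inv c'"
  using assms(3,1,2)
proof (cases rule: game_move.cases)
  case (S1 c s t m r)
  then show ?thesis using assms(1) by auto
next
  case (S2a s a s' c t m r)
  then show ?thesis using assms(1) start_inv by auto
next
  case (S2b s a s' c t m r)
  then show ?thesis using assms(1) start_inv by auto
next
  case (S3 t a t' s c m r)
  then show ?thesis using assms(1) start_inv Bsym by auto
qed auto

lemma PF_least: "\<exists>n. PF u a u' n vb \<Longrightarrow> PF u a u' (dF u a u' vb) vb"
  unfolding dF_def by (rule LeastI_ex)

lemma PS_least: "\<exists>n. PS u' n vb \<Longrightarrow> PS u' (dS u' vb) vb"
  unfolding dS_def by (rule LeastI_ex)

lemma chooseA_ok: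
  assumes "PF u a u' 0 vb"
  shows "tr vb a (chooseA vb a u') \<and> fin u' (chooseA vb a u')"
proof -
  from assms have "\<exists>v2. tr vb a v2 \<and> fin u' v2" unfolding PF_def good1_def by auto
  then show ?thesis unfolding chooseA_def by (rule someI_ex)
qed

lemma chooseF_ok:
  assumes "\<exists>n. PF u a u' n vb" "dF u a u' vb \<noteq> 0"
  shows "TS vb (chooseF u a u' vb) \<and> PF u a u' (dF u a u' vb - 1) (chooseF u a u' vb)
    \<and> dF u a u' (chooseF u a u' vb) < dF u a u' vb"
proof -
  obtain m where m: "dF u a u' vb = Suc m" using assms(2) by (cases "dF u a u' vb") auto
  from PF_least[OF assms(1)] m obtain z where z: "(TS ^^ Suc m) vb z" "x = ModeB \<longrightarrow> B u z" "good1 a u' z"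
    unfolding PF_def by auto
  from relpowp_Suc_D2[OF z(1)] obtain w where "TS vb w" "(TS ^^ m) w z" by blast
  then have "\<exists>w. TS vb w \<and> PF u a u' (dF u a u' vb - 1) w" using z m unfolding PF_def by auto
  then have c: "TS vb (chooseF u a u' vb) \<and> PF u a u' (dF u a u' vb - 1) (chooseF u a u' vb)"
    unfolding chooseF_def by (rule someI_ex)
  then have "dF u a u' (chooseF u a u' vb) \<le> dF u a u' vb - 1"
    unfolding dF_def[of _ _ _ "chooseF u a u' vb"] by (blast intro: Least_le)
  then show ?thesis using c m by auto
qed

lemma chooseS_ok:
  assumes "\<exists>n. PS u' n vb" "\<not> B u' vb"
  shows "TS vb (chooseS u' vb) \<and> PS u' (dS u' vb - 1) (chooseS u' vb)
    \<and> dS u' (chooseS u' vb) < dS u' vb"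
proof -
  have "dS u' vb \<noteq> 0"
  proof
    assume h: "dS u' vb = 0"
    show False using PS_least[OF assms(1)] assms(2) unfolding PS_def h by auto
  qed
  then obtain m where m: "dS u' vb = Suc m" by (cases "dS u' vb") auto
  from PS_least[OF assms(1)] m obtain z where z: "(TS ^^ Suc m) vb z" "B u' z"
    unfolding PS_def by auto
  from relpowp_Suc_D2[OF z(1)] obtain w where "TS vb w" "(TS ^^ m) w z" by blast
  then have "\<exists>w. TS vb w \<and> PS u' (dS u' vb - 1) w" using z m unfolding PS_def by auto
  then have c: "TS vb (chooseS u' vb) \<and> PS u' (dS u' vb - 1) (chooseS u' vb)"
    unfolding chooseS_def by (rule someI_ex)
  then have "dS u' (chooseS u' vb) \<le> dS u' vb - 1"
    unfolding dS_def[of _ "chooseS u' vb"] by (blast intro: Least_le)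
  then show ?thesis using c m by auto
qed

lemma Smile_E: "y = ModeO \<Longrightarrow> Smile \<in> Eset x y" unfolding Eset_def by simp
lemma Frown_E: "x = ModeO \<Longrightarrow> Frown \<in> Eset x y" unfolding Eset_def by simp

lemma step_ok:
  fixes r :: reward
  assumes "DInv u v a u' vb f"
  defines "c \<equiv> DConf (u,v) (Some (a,u')) (Some (vb,f)) r"
  shows "game_move tau tr (Eset x y) c (step c) \<and> Inv (step c)"
proof (cases f)
  case Frown
  note D = assms(1)[unfolded DInv_def Frown]
  show ?thesis
  proof (cases "\<exists>n. PF u a u' n vb")
    case Fin: True
    show ?thesis
    proof (cases "dF u a u' vb = 0")
      case True
      let ?v2 = "chooseA vb a u'"
      have PF0: "PF u a u' 0 vb" using PF_least[OF Fin] True by simp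
      note A = chooseA_ok[OF PF0]
      show ?thesis
      proof (cases "B u' ?v2")
        case True
        then have st: "step c = SConf (u', ?v2) None None Check" using Fin \<open>dF u a u' vb = 0\<close> Frown
          unfolding c_def by simp
        show ?thesis unfolding st unfolding c_def Frown
        proof
          show "game_move tau tr (Eset x y) (DConf (u, v) (Some (a, u')) (Some (vb, Frown)) r)
             (SConf (u', ?v2) None None Check)" by (rule game_move.D2b) (use A in auto)
        qed (use True in simp)
      next
        case False
        then have st: "step c = SConf (u, v) (Some (a,u')) (Some (?v2, Smile)) Star"
          using Fin \<open>dF u a u' vb = 0\<close> Frown unfolding c_def by simp
        have yO: "y = ModeO" using A False unfolding fin_def by (cases y) auto
        have "\<exists>w. tau_steps tau tr ?v2 w \<and> B u' w" using A yO unfolding fin_def by simp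
        then have "\<exists>n. PS u' n ?v2" unfolding PS_def tau_steps_def rtranclp_power by blast
        then have "DInv u v a u' ?v2 Smile" using D yO False unfolding DInv_def by simp
        then show ?thesis unfolding st unfolding c_def Frown
        proof -
          assume DI: "DInv u v a u' ?v2 Smile"
          show "game_move tau tr (Eset x y) (DConf (u, v) (Some (a, u')) (Some (vb, Frown)) r)
             (SConf (u, v) (Some (a, u')) (Some (?v2, Smile)) Star) \<and> Inv (SConf (u, v) (Some (a, u')) (Some (?v2, Smile)) Star)"
          proof
            show "game_move tau tr (Eset x y) (DConf (u, v) (Some (a, u')) (Some (vb, Frown)) r)
             (SConf (u, v) (Some (a, u')) (Some (?v2, Smile)) Star)"
              by (rule game_move.D2c) (use A Smile_E[OF yO] in auto)
          qed (use DI D in simp)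
        qed
      qed
    next
      case False
      let ?w = "chooseF u a u' vb"
      note C = chooseF_ok[OF Fin False]
      show ?thesis
      proof (cases "x = ModeB")
        case True
        have st: "step c = SConf (u, ?w) (Some (a,u')) (Some (?w, Frown)) Star"
          using Fin False Frown unfolding c_def by (simp add: if_P[OF True])
        from C True obtain z where z: "(TS ^^ (dF u a u' vb - 1)) ?w z" "B u z" unfolding PF_def by auto
        have vb: "vb = v" using D True by simp
        have t1: "tau_steps tau tr v ?w" using C vb unfolding tau_steps_def by blast
        have t2: "tau_steps tau tr ?w z" using z(1) unfolding tau_steps_def rtranclp_power by blast
        have "B u ?w" using stut[OF True _ t1 t2 z(2)] D by simp
        then have "DInv u ?w a u' ?w Frown" using D C unfolding DInv_def by blast
        then show ?thesis unfolding st unfolding c_def Frown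
        proof -
          assume DI: "DInv u ?w a u' ?w Frown"
          show "game_move tau tr (Eset x y) (DConf (u, v) (Some (a, u')) (Some (vb, Frown)) r)
             (SConf (u, ?w) (Some (a, u')) (Some (?w, Frown)) Star) \<and> Inv (SConf (u, ?w) (Some (a, u')) (Some (?w, Frown)) Star)"
          proof
            show "game_move tau tr (Eset x y) (DConf (u, v) (Some (a, u')) (Some (vb, Frown)) r)
             (SConf (u, ?w) (Some (a, u')) (Some (?w, Frown)) Star)"
              by (rule game_move.D3a) (use C in auto)
          qed (use DI \<open>B u ?w\<close> in simp)
        qed
      next
        case False
        then have xO: "x = ModeO" by (cases x) auto
        have st: "step c = SConf (u, v) (Some (a,u')) (Some (?w, Frown)) Star"
          using Fin \<open>dF u a u' vb \<noteq> 0\<close> Frown False unfolding c_def by simp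
        have "DInv u v a u' ?w Frown" using D C xO unfolding DInv_def by blast
        then show ?thesis unfolding st unfolding c_def Frown
        proof -
          assume DI: "DInv u v a u' ?w Frown"
          show "game_move tau tr (Eset x y) (DConf (u, v) (Some (a, u')) (Some (vb, Frown)) r)
             (SConf (u, v) (Some (a, u')) (Some (?w, Frown)) Star) \<and> Inv (SConf (u, v) (Some (a, u')) (Some (?w, Frown)) Star)"
          proof
            show "game_move tau tr (Eset x y) (DConf (u, v) (Some (a, u')) (Some (vb, Frown)) r)
             (SConf (u, v) (Some (a, u')) (Some (?w, Frown)) Star)"
              by (rule game_move.D3c) (use C Frown_E[OF xO] in auto)
          qed (use DI D in simp)
        qed
      qed
    qed
  next
    case False
    then have st: "step c = SConf (u', vb) None None Star" using Frown unfolding c_def by simp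
    have "vb = v" "a = tau" "B u' v" using D False by auto
    then show ?thesis unfolding st unfolding c_def Frown
    proof -
      assume h: "vb = v" "a = tau" "B u' v"
      show "game_move tau tr (Eset x y) (DConf (u, v) (Some (a, u')) (Some (vb, Frown)) r)
             (SConf (u', vb) None None Star) \<and> Inv (SConf (u', vb) None None Star)"
      proof
        show "game_move tau tr (Eset x y) (DConf (u, v) (Some (a, u')) (Some (vb, Frown)) r)
             (SConf (u', vb) None None Star)" by (rule game_move.D1) (use h in simp)
      qed (use h in simp)
    qed
  qed
next
  case Smile
  note D = assms(1)[unfolded DInv_def Smile]
  let ?w = "chooseS u' vb"
  have C: "TS vb ?w \<and> PS u' (dS u' vb - 1) ?w" using chooseS_ok D by auto
  show ?thesis
  proof (cases "B u' ?w")
    case True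
    then have st: "step c = SConf (u', ?w) None None Check" using Smile unfolding c_def by simp
    show ?thesis unfolding st unfolding c_def Smile
    proof
      show "game_move tau tr (Eset x y) (DConf (u, v) (Some (a, u')) (Some (vb, Smile)) r)
             (SConf (u', ?w) None None Check)" by (rule game_move.D3b) (use C in auto)
    qed (use True in simp)
  next
    case False
    then have st: "step c = SConf (u, v) (Some (a,u')) (Some (?w, Smile)) Star" using Smile unfolding c_def by simp
    have "DInv u v a u' ?w Smile" using D C False unfolding DInv_def by blast
    then show ?thesis unfolding st unfolding c_def Smile
    proof -
      assume DI: "DInv u v a u' ?w Smile"
      have Bu: "B u v" using D by simp
      have yO: "y = ModeO" using D by simp
      show "game_move tau tr (Eset x y) (DConf (u, v) (Some (a, u')) (Some (vb, Smile)) r)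
             (SConf (u, v) (Some (a, u')) (Some (?w, Smile)) Star) \<and> Inv (SConf (u, v) (Some (a, u')) (Some (?w, Smile)) Star)"
      proof
        show "game_move tau tr (Eset x y) (DConf (u, v) (Some (a, u')) (Some (vb, Smile)) r)
             (SConf (u, v) (Some (a, u')) (Some (?w, Smile)) Star)"
          by (rule game_move.D3c) (use C Smile_E[OF yO] in auto)
      qed (use DI Bu in simp)
    qed
  qed
qed

lemma step_ok':
  assumes "Inv c" "is_dconf c"
  shows "game_move tau tr (Eset x y) c (step c) \<and> Inv (step c)"
proof -
  obtain u v cc m r where c: "c = DConf (u,v) cc m r" using assms(2) by (cases c) auto
  then obtain a u' vb f where "cc = Some (a,u')" "m = Some (vb,f)" "DInv u v a u' vb f"
    using assms(1) by auto
  then show ?thesis using step_ok c by blast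
qed

end

fun lpos :: "('s, 'a) conf \<Rightarrow> 's" where
  "lpos (DConf (u,v) c m r) = u" | "lpos (SConf (u,v) c m r) = u"
fun rpos :: "('s, 'a) conf \<Rightarrow> 's" where
  "rpos (DConf (u,v) c m r) = v" | "rpos (SConf (u,v) c m r) = v"

lemma S_to_D: "game_move tau tr E c c' \<Longrightarrow> \<not> is_dconf c \<Longrightarrow> is_dconf c'"
  by (induction rule: game_move.induct) auto

context gm begin

lemma prefix_inv:
  assumes cp: "consistent_prefix tau tr (Eset x y) (\<lambda>ps. step (last ps)) c0 ps" and i0: "Inv c0"
  shows "\<forall>i < length ps. Inv (ps ! i)"
proof (intro allI impI)
  fix i assume "i < length ps"
  then show "Inv (ps ! i)"
  proof (induction i)
    case 0
    then show ?case using cp i0 unfolding consistent_prefix_def by (metis hd_conv_nth)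
  next
    case (Suc i)
    then have IH: "Inv (ps ! i)" by simp
    from cp Suc(2) have mv: "game_move tau tr (Eset x y) (ps ! i) (ps ! Suc i)"
      and st: "is_dconf (ps ! i) \<longrightarrow> ps ! Suc i = step (last (take (Suc i) ps))"
      unfolding consistent_prefix_def by auto
    have "last (take (Suc i) ps) = ps ! i"
      using Suc(2) by (subst last_conv_nth) (auto simp: min_def)
    with st have st': "is_dconf (ps ! i) \<longrightarrow> ps ! Suc i = step (ps ! i)" by simp
    show ?case
    proof (cases "is_dconf (ps ! i)")
      case True
      then show ?thesis using st' step_ok'[OF IH True] by simp
    next
      case False
      then show ?thesis using spoiler_inv[OF IH False mv] by simp
    qed
  qed
qed

lemma play_inf:
  assumes p0: "Inv (p 0)"
    and mv: "\<forall>n. game_move tau tr (Eset x y) (p n) (p (Suc n)) \<and> (is_dconf (p n) \<longrightarrow> p (Suc n) = step (p n))"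
  shows "\<exists>\<^sub>\<infinity>n. conf_reward (p n) = Check"
proof (rule ccontr)
  have inv: "Inv (p n)" for n
  proof (induction n)
    case 0 then show ?case using p0 .
  next
    case (Suc n)
    show ?case
    proof (cases "is_dconf (p n)")
      case True
      then show ?thesis using step_ok'[OF Suc True] mv by simp
    next
      case False
      then show ?thesis using spoiler_inv[OF Suc False] mv by blast
    qed
  qed
  assume "\<not> (\<exists>\<^sub>\<infinity>n. conf_reward (p n) = Check)"
  then obtain N where N: "\<And>n. n \<ge> N \<Longrightarrow> conf_reward (p n) \<noteq> Check"
    unfolding cofinite_eq_sequentially frequently_sequentially by auto
  have T1: "p (Suc n) = DConf pos (Some ch) m Star"
    if "n \<ge> N" "p n = SConf pos (Some ch) m r" for n pos ch m r
  proof -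
    have g: "game_move tau tr (Eset x y) (p n) (p (Suc n))" using mv by blast
    have nc: "conf_reward (p (Suc n)) \<noteq> Check" using N that(1) by simp
    from g that(2) nc show ?thesis
      by (cases rule: game_move.cases) auto
  qed
  have T2: "\<exists>a s'. tr s a s' \<and> p (Suc n) = DConf (s,t) (Some (a,s')) (Some (t,Frown)) Star"
    if "n \<ge> N" "p n = SConf (s,t) None m r" for n s t m r
  proof -
    have g: "game_move tau tr (Eset x y) (p n) (p (Suc n))" using mv by blast
    have nc: "conf_reward (p (Suc n)) \<noteq> Check" using N that(1) by simp
    from g that(2) nc show ?thesis
      by (cases rule: game_move.cases) auto
  qed
  have stepn: "p (Suc n) = step (p n)" if "is_dconf (p n)" for n using mv that by blast
  have smile: "False" if "n \<ge> N" "p n = DConf (u,v) (Some (a,u')) (Some (vb,Smile)) r" "dS u' vb = d"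
    for d n u v a u' vb r
    using that
  proof (induction d arbitrary: n vb r rule: less_induct)
    case (less d)
    have D: "DInv u v a u' vb Smile" using inv[of n] less.prems(2) by simp
    then have D': "(\<exists>k. PS u' k vb)" "\<not> B u' vb" unfolding DInv_def by auto
    let ?w = "chooseS u' vb"
    note C = chooseS_ok[OF D']
    have ps: "p (Suc n) = step (p n)" using stepn less.prems(2) by simp
    show False
    proof (cases "B u' ?w")
      case True
      then have "p (Suc n) = SConf (u', ?w) None None Check" using ps less.prems(2) by simp
      then show False using N[of "Suc n"] less.prems(1) by simp
    next
      case False
      then have "p (Suc n) = SConf (u, v) (Some (a,u')) (Some (?w, Smile)) Star" using ps less.prems(2) by simp
      then have "p (Suc (Suc n)) = DConf (u, v) (Some (a,u')) (Some (?w, Smile)) Star"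
        using T1 less.prems(1) by simp
      then show False using less.IH[of "dS u' ?w" "Suc (Suc n)" ?w Star] C less.prems by simp
    qed
  qed
  have frown: "False" if "n \<ge> N" "p n = DConf (u,v) (Some (a,u')) (Some (vb,Frown)) r"
     "\<exists>k. PF u a u' k vb" "dF u a u' vb = d"
    for d n v vb r u a u'
    using that
  proof (induction d arbitrary: n v vb r rule: less_induct)
    case (less d)
    have ps: "p (Suc n) = step (p n)" using stepn less.prems(2) by simp
    show False
    proof (cases "d = 0")
      case True
      let ?v2 = "chooseA vb a u'"
      show False
      proof (cases "B u' ?v2")
        case True
        then have "p (Suc n) = SConf (u', ?v2) None None Check"
          using ps less.prems \<open>d = 0\<close> by simp
        then show False using N[of "Suc n"] less.prems(1) by simp
      next
        case False
        then have "p (Suc n) = SConf (u, v) (Some (a,u')) (Some (?v2, Smile)) Star"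
          using ps less.prems \<open>d = 0\<close> by simp
        then have "p (Suc (Suc n)) = DConf (u, v) (Some (a,u')) (Some (?v2, Smile)) Star"
          using T1 less.prems(1) by simp
        then show False using smile[of "Suc (Suc n)" u v a u' ?v2 Star "dS u' ?v2"] less.prems(1) by simp
      qed
    next
      case False
      let ?w = "chooseF u a u' vb"
      note C = chooseF_ok[OF less.prems(3)] 
      have C': "TS vb ?w" "PF u a u' (dF u a u' vb - 1) ?w" "dF u a u' ?w < dF u a u' vb"
        using C False less.prems(4) by auto
      have e: "p (Suc n) = (if x = ModeB then SConf (u, ?w) (Some (a,u')) (Some (?w, Frown)) Star
            else SConf (u, v) (Some (a,u')) (Some (?w, Frown)) Star)"
        using ps less.prems False by simp
      have "\<exists>w2. p (Suc n) = SConf (u, w2) (Some (a,u')) (Some (?w, Frown)) Star"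
        using e by (cases "x = ModeB") auto
      then obtain w2 where "p (Suc n) = SConf (u, w2) (Some (a,u')) (Some (?w, Frown)) Star" by blast
      then have p2: "p (Suc (Suc n)) = DConf (u, w2) (Some (a,u')) (Some (?w, Frown)) Star"
        using T1 less.prems(1) by simp
      show False using less.IH[of "dF u a u' ?w" "Suc (Suc n)" w2 ?w Star] C' p2
        less.prems by auto
    qed
  qed
  have chain: "\<exists>u v u'. p n = DConf (u,v) (Some (tau,u')) (Some (v,Frown)) (conf_reward (p n))
      \<and> \<not> (\<exists>k. PF u tau u' k v) \<and> B u v \<and> B u' v \<and> tr u tau u'
      \<and> (\<exists>a2 u''. p (Suc (Suc n)) = DConf (u',v) (Some (a2,u'')) (Some (v,Frown)) Star)"
    if nN: "n \<ge> N" and dc: "is_dconf (p n)" for n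
  proof -
    obtain u v cc m r where pn: "p n = DConf (u,v) cc m r" using dc by (cases "p n") auto
    then obtain a u' vb f where cc: "cc = Some (a,u')" "m = Some (vb,f)" and D: "DInv u v a u' vb f"
      using inv[of n] by auto
    have fF: "f = Frown"
    proof (rule ccontr)
      assume "f \<noteq> Frown"
      then have "f = Smile" by (cases f) auto
      then show False using smile[of n u v a u' vb r] nN pn cc by simp
    qed
    have nF: "\<not> (\<exists>k. PF u a u' k vb)"
      using frown[of n u v a u' vb r] nN pn cc fF by auto
    then have h: "vb = v" "a = tau" "B u' v" "B u v" "tr u a u'" using D fF unfolding DInv_def by auto
    have "p (Suc n) = SConf (u', vb) None None Star" using stepn[of n] dc pn cc fF nF by simp
    then obtain a2 u'' where "p (Suc (Suc n)) = DConf (u',v) (Some (a2,u'')) (Some (v,Frown)) Star"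
      using T2[of "Suc n" u' vb None Star] nN h(1) by fastforce
    then show ?thesis using pn cc fF nF h by auto
  qed
  obtain n0 where n0: "n0 \<ge> N" "is_dconf (p n0)"
  proof (cases "is_dconf (p N)")
    case True then show ?thesis using that by blast
  next
    case False
    have "game_move tau tr (Eset x y) (p N) (p (Suc N))" using mv by blast
    then have "is_dconf (p (Suc N))" by (rule S_to_D) (rule False)
    then show ?thesis using that[of "Suc N"] by simp
  qed
  define g where "g i = p (n0 + 2 * i)" for i
  have gS: "g (Suc i) = p (Suc (Suc (n0 + 2 * i)))" for i unfolding g_def by simp
  have gd: "is_dconf (g i)" for i
  proof (induction i)
    case 0 then show ?case using n0 unfolding g_def by simp
  next
    case (Suc i)
    from chain[of "n0 + 2 * i"] Suc n0(1) show ?case unfolding gS by (auto simp: g_def)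
  qed
  have F: "\<not> (\<exists>k. PF (lpos (g i)) tau (lpos (g (Suc i))) k (rpos (g i))) \<and> B (lpos (g i)) (rpos (g i))
      \<and> tr (lpos (g i)) tau (lpos (g (Suc i))) \<and> rpos (g (Suc i)) = rpos (g i)" for i
  proof -
    from chain[of "n0 + 2 * i"] gd[of i] n0(1) obtain u v u' a2 u'' where
      A: "g i = DConf (u,v) (Some (tau,u')) (Some (v,Frown)) (conf_reward (g i))"
      "\<not> (\<exists>k. PF u tau u' k v)" "B u v" "tr u tau u'"
      "g (Suc i) = DConf (u',v) (Some (a2,u'')) (Some (v,Frown)) Star"
      unfolding gS by (auto simp: g_def)
    have l: "lpos (g i) = u" by (subst A(1)) simp
    have r: "rpos (g i) = v" by (subst A(1)) simp
    show ?thesis using A(2-5) l r by simp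
  qed
  define V where "V = rpos (g 0)"
  have RV: "rpos (g i) = V" for i
    by (induction i) (use F V_def in auto)
  define s where "s i = lpos (g i)" for i
  have Fs: "\<not> (\<exists>k. PF (s i) tau (s (Suc i)) k V) \<and> B (s i) V \<and> tr (s i) tau (s (Suc i))" for i
    using F[of i] RV[of i] unfolding s_def by simp
  have e1: "B (s 1) V" using Fs[of 1] by simp
  have e2: "(\<lambda>i. s (Suc i)) 0 = s 1 \<and> (\<forall>n. TS ((\<lambda>i. s (Suc i)) n) ((\<lambda>i. s (Suc i)) (Suc n)))"
    using Fs by simp
  have "\<exists>t' k. tau_steps_plus tau tr V t' \<and> B ((\<lambda>i. s (Suc i)) k) t'"
    using ed[unfolded edc_def, rule_format, OF e1, of "\<lambda>i. s (Suc i)"] e2 by blast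
  then obtain t' k where tk: "tau_steps_plus tau tr V t'" "B (s (Suc k)) t'" by auto
  have "\<exists>n. PF (s k) tau (s (Suc k)) n V"
  proof (cases "x = ModeB")
    case True
    obtain c1 where c1: "TS V c1" "tau_steps tau tr c1 t'"
      using tk(1) unfolding tau_steps_plus_def tau_steps_def by (blast dest: tranclpD)
    have "B (s (Suc k)) c1"
      using stut[OF True _ _ c1(2) tk(2)] Fs[of "Suc k"] c1(1) unfolding tau_steps_def by blast
    then have "PF (s k) tau (s (Suc k)) 0 V"
      using Fs[of k] c1(1) unfolding PF_def good1_def fin_def tau_steps_def by auto
    then show ?thesis by blast
  next
    case False
    obtain t0 where t0: "tau_steps tau tr V t0" "TS t0 t'"
      using tk(1) unfolding tau_steps_plus_def tau_steps_def
      by (metis rtranclp.rtrancl_refl tranclp.cases tranclp_into_rtranclp)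
    obtain n where "(TS ^^ n) V t0" using t0(1) unfolding tau_steps_def rtranclp_power by blast
    then have "PF (s k) tau (s (Suc k)) n V"
      using False t0(2) tk(2) unfolding PF_def good1_def fin_def tau_steps_def by auto
    then show ?thesis by blast
  qed
  then show False using Fs[of k] by blast
qed

lemma win:
  assumes "B s t"
  shows "dup_winning tau tr (Eset x y) (\<lambda>ps. step (last ps)) (SConf (s,t) None None Star)"
  unfolding dup_winning_def
proof (intro conjI allI impI)
  have i0: "Inv (SConf (s,t) None None Star)" using assms by simp
  fix ps assume cp: "consistent_prefix tau tr (Eset x y) (\<lambda>ps. step (last ps)) (SConf (s, t) None None Star) ps"
    and d: "is_dconf (last ps)"
  have ne: "ps \<noteq> []" using cp unfolding consistent_prefix_def by simp
  have "Inv (last ps)" using prefix_inv[OF cp i0] ne by (simp add: last_conv_nth)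
  then show "game_move tau tr (Eset x y) (last ps) (step (last ps))" using step_ok' d by blast
next
  fix p :: "nat \<Rightarrow> ('s, 'a) conf"
  assume p0: "p 0 = SConf (s, t) None None Star"
    and mv: "\<forall>n. game_move tau tr (Eset x y) (p n) (p (Suc n)) \<and>
             (is_dconf (p n) \<longrightarrow> p (Suc n) = step (last (map p [0..<Suc n])))"
  have "\<forall>n. game_move tau tr (Eset x y) (p n) (p (Suc n)) \<and> (is_dconf (p n) \<longrightarrow> p (Suc n) = step (p n))"
    using mv by simp
  then show "\<exists>\<^sub>\<infinity>n. conf_reward (p n) = Check" using play_inf p0 assms by simp
qed

end

theorem lemma6p7:
  fixes tau :: 'a and tr :: "'s \<Rightarrow> 'a \<Rightarrow> 's \<Rightarrow> bool"
    and x y :: mode and s t :: 's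
  assumes "bisimilar_ed tau tr x y s t"
  shows "game_equiv_ed tau tr (Eset x y) s t"
proof -
  obtain R where R: "generic_bisim_ed tau tr x y R" "R s t" using assms unfolding bisimilar_ed_def by blast
  show ?thesis
  proof (cases x)
    case ModeO
    interpret gm tau tr x y R
      by unfold_locales (use R ModeO in auto)
    show ?thesis unfolding game_equiv_ed_def using win R(2) by blast
  next
    case ModeB
    interpret gm tau tr x y "SS tau tr y"
    proof unfold_locales
      show "generic_bisim_ed tau tr x y (SS tau tr y)" using SS_gb ModeB by simp
    qed (rule SS_stutter)
    have "SS tau tr y s t" using gb_SS R ModeB by simp
    then show ?thesis unfolding game_equiv_ed_def using win by blast
  qed
qed

end
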